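(* Let $X$ be a compact metric space, $G:X\to\mathcal{K}(X)$ a measurable set-valued map, $f\in C(X,\mathbb{R})$ and $\mathcal{U}$ a finite open cover of $X$. Then $$F:x\mapsto\inf\Big\{\sum_{V\in\mathcal{V}}\sup_{y\in V\cap G(x)}f(y):\ \mathcal{V}\in\mathcal{C}_X,\ \mathcal{V}\succeq\mathcal{U}\Big\}$$ is a Borel measurable map.
   Context: $\mathcal{K}(X)$ is the family of nonempty closed subsets of $X$ with the Hausdorff metric; $G$ is measurable if $\{x: G(x)\cap V\neq\emptyset\}$ is Borel for every closed (equivalently, open) $V\subseteq X$. $\mathcal{C}_X$ is the set of finite covers of $X$ by Borel sets; $\mathcal{V}\succeq\mathcal{U}$ means each element of $\mathcal{V}$ lies in some element of $\mathcal{U}$. Terms with $V\cap G(x)=\emptyset$ are omitted. *)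

theory Defs
  imports "HOL-Analysis.Analysis"
begin

text \<open>X is a compact subset of a metric space, regarded as a metric space itself;
Borel sets of X are the sets of the restricted Borel sigma-algebra.\<close>

definition borel_on :: "'a::metric_space set \<Rightarrow> 'a measure" where
  "borel_on X = restrict_space borel X"

definition setvalued_into_K :: "'a::metric_space set \<Rightarrow> ('a \<Rightarrow> 'a set) \<Rightarrow> bool" where
  "setvalued_into_K X G \<longleftrightarrow>
     (\<forall>x\<in>X. G x \<noteq> {} \<and> G x \<subseteq> X \<and> closedin (top_of_set X) (G x))"

definition measurable_multifun :: "'a::metric_space set \<Rightarrow> ('a \<Rightarrow> 'a set) \<Rightarrow> bool" where
  "measurable_multifun X G \<longleftrightarrow>
     (\<forall>V. closedin (top_of_set X) V \<longrightarrow> {x\<in>X. G x \<inter> V \<noteq> {}} \<in> sets (borel_on X))"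

definition borel_covers :: "'a::metric_space set \<Rightarrow> 'a set set set" where
  "borel_covers X = {\<V>. finite \<V> \<and> \<V> \<subseteq> sets (borel_on X) \<and> \<Union>\<V> = X}"

definition finite_open_cover :: "'a::metric_space set \<Rightarrow> 'a set set \<Rightarrow> bool" where
  "finite_open_cover X \<U> \<longleftrightarrow> finite \<U> \<and> (\<forall>U\<in>\<U>. openin (top_of_set X) U) \<and> \<Union>\<U> = X"

definition refines :: "'a set set \<Rightarrow> 'a set set \<Rightarrow> bool" (infix "\<succeq>\<^sub>c" 50) where
  "\<V> \<succeq>\<^sub>c \<U> \<longleftrightarrow> (\<forall>V\<in>\<V>. \<exists>U\<in>\<U>. V \<subseteq> U)"

text \<open>The function F, valued in the extended reals (the infimum may be -infinity);
terms with V inter G(x) empty are omitted (contribute 0).\<close>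
definition Ffun :: "'a::metric_space set \<Rightarrow> ('a \<Rightarrow> 'a set) \<Rightarrow> ('a \<Rightarrow> real) \<Rightarrow> 'a set set
                    \<Rightarrow> 'a \<Rightarrow> ereal" where
  "Ffun X G f \<U> x = Inf {(\<Sum>V\<in>\<V>. if V \<inter> G x = {} then 0 else ereal (Sup (f ` (V \<inter> G x))))
                         | \<V>. \<V> \<in> borel_covers X \<and> \<V> \<succeq>\<^sub>c \<U>}"

end

theory Submission
  imports Defs "HOL-Library.Countable"
begin

definition trK :: "('a \<Rightarrow> real) \<Rightarrow> 'a set \<Rightarrow> 'a set \<Rightarrow> real" where
  "trK f K V = (if V \<inter> K = {} then 0 else Sup (f ` (V \<inter> K)))"

definition balg :: "'a set \<Rightarrow> 'a set set \<Rightarrow> bool" where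
  "balg X \<A> \<longleftrightarrow> {} \<in> \<A> \<and> (\<forall>a\<in>\<A>. a \<subseteq> X) \<and> (\<forall>a\<in>\<A>. \<forall>b\<in>\<A>. a \<union> b \<in> \<A>) \<and> (\<forall>a\<in>\<A>. X - a \<in> \<A>)"

lemma balg_Un: "balg X \<A> \<Longrightarrow> a \<in> \<A> \<Longrightarrow> b \<in> \<A> \<Longrightarrow> a \<union> b \<in> \<A>"
  by (simp add: balg_def)
lemma balg_Compl: "balg X \<A> \<Longrightarrow> a \<in> \<A> \<Longrightarrow> X - a \<in> \<A>"
  by (simp add: balg_def)
lemma balg_sub: "balg X \<A> \<Longrightarrow> a \<in> \<A> \<Longrightarrow> a \<subseteq> X"
  by (simp add: balg_def)
lemma balg_empty: "balg X \<A> \<Longrightarrow> {} \<in> \<A>"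
  by (simp add: balg_def)
lemma balg_X: "balg X \<A> \<Longrightarrow> X \<in> \<A>"
  using balg_Compl[of X \<A> "{}"] balg_empty by fastforce
lemma balg_Int: assumes "balg X \<A>" "a \<in> \<A>" "b \<in> \<A>" shows "a \<inter> b \<in> \<A>"
proof -
  have "a \<inter> b = X - ((X - a) \<union> (X - b))" using balg_sub[OF assms(1)] assms(2,3) by blast
  thus ?thesis using assms balg_Un balg_Compl by metis
qed
lemma balg_Diff: assumes "balg X \<A>" "a \<in> \<A>" "b \<in> \<A>" shows "a - b \<in> \<A>"
proof -
  have "a - b = a \<inter> (X - b)" using balg_sub[OF assms(1)] assms(2,3) by blast
  thus ?thesis using assms balg_Int balg_Compl by metis
qed
lemma balg_Union: assumes "balg X \<A>" "finite F" "F \<subseteq> \<A>" shows "\<Union>F \<in> \<A>"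
  using assms(2,3)
proof (induction F rule: finite_induct)
  case empty then show ?case using balg_empty[OF assms(1)] by simp
next
  case (insert x F) then show ?case using balg_Un[OF assms(1)] by simp
qed
lemma balg_Inter: assumes "balg X \<A>" "finite F" "F \<subseteq> \<A>" shows "X \<inter> \<Inter>F \<in> \<A>"
  using assms(2,3)
proof (induction F rule: finite_induct)
  case empty then show ?case using balg_X[OF assms(1)] by simp
next
  case (insert x F)
  have "X \<inter> \<Inter>(insert x F) = x \<inter> (X \<inter> \<Inter>F)" by blast
  then show ?case using balg_Int[OF assms(1)] insert by simp
qed

datatype sexp = SAt nat | SCpl sexp | SUn sexp sexp
instance sexp :: countable by countable_datatype

primrec sev :: "'a set \<Rightarrow> (nat \<Rightarrow> 'a set) \<Rightarrow> sexp \<Rightarrow> 'a set" where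
  "sev X g (SAt n) = X \<inter> g n"
| "sev X g (SCpl e) = X - sev X g e"
| "sev X g (SUn a b) = sev X g a \<union> sev X g b"

lemma balg_sev: "balg X (range (sev X g))"
  unfolding balg_def
proof (intro conjI ballI)
  show "{} \<in> range (sev X g)"
    by (rule range_eqI[of _ _ "SCpl (SUn (SAt 0) (SCpl (SAt 0)))"]) auto
  fix a assume "a \<in> range (sev X g)"
  then obtain e where e: "a = sev X g e" by auto
  show "a \<subseteq> X" unfolding e by (induction e) auto
  show "X - a \<in> range (sev X g)" unfolding e by (rule range_eqI[of _ _ "SCpl e"]) auto
  fix b assume "b \<in> range (sev X g)"
  then obtain e' where e': "b = sev X g e'" by auto
  show "a \<union> b \<in> range (sev X g)" unfolding e e' by (rule range_eqI[of _ _ "SUn e e'"]) auto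
qed

lemma countable_sev: "countable (range (sev X g))"
  by simp

lemma sev_props:
  fixes X :: "'a::metric_space set"
  assumes "closed X" "\<And>n. openin (top_of_set X) (g n)"
  shows "fsigma_in (top_of_set X) (sev X g e) \<and> gdelta_in (top_of_set X) (sev X g e)
         \<and> sev X g e \<in> sets borel"
proof (induction e)
  have met: "metrizable_space (top_of_set X)"
    by (simp add: metrizable_space_euclidean metrizable_space_subtopology)
  case (SAt n)
  have o: "openin (top_of_set X) (X \<inter> g n)" using assms(2)[of n] by (metis inf.absorb2 openin_imp_subset)
  then obtain Op where "open Op" "X \<inter> g n = X \<inter> Op" by (auto simp: openin_open)
  then have "X \<inter> g n \<in> sets borel" using assms(1) by (metis borel_closed borel_open sets.Int)
  then show ?case using o met by (simp add: open_imp_fsigma_in open_imp_gdelta_in)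
next
  case (SCpl e)
  then show ?case
    using fsigma_in_diff[of "top_of_set X" X "sev X g e"] gdelta_in_diff[of "top_of_set X" X "sev X g e"]
      fsigma_in_topspace[of "top_of_set X"] gdelta_in_topspace[of "top_of_set X"] assms(1)
    by (auto intro: sets.Diff borel_closed)
next
  case (SUn e1 e2)
  then show ?case by (auto intro: fsigma_in_Un gdelta_in_Un sets.Un)
qed

lemma lower_inv_fsigma:
  fixes X :: "'a::metric_space set"
  assumes "measurable_multifun X G" "fsigma_in (top_of_set X) B"
  shows "{x\<in>X. G x \<inter> B \<noteq> {}} \<in> sets (borel_on X)"
proof -
  obtain \<T> where T: "countable \<T>" "\<And>C. C \<in> \<T> \<Longrightarrow> closedin (top_of_set X) C" "\<Union>\<T> = B"
    using assms(2) unfolding fsigma_in_def union_of_def by auto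
  have "{x\<in>X. G x \<inter> B \<noteq> {}} = (\<Union>C\<in>\<T>. {x\<in>X. G x \<inter> C \<noteq> {}})" using T(3) by blast
  also have "\<dots> \<in> sets (borel_on X)"
    using T(1,2) assms(1) unfolding measurable_multifun_def
    by (intro sets.countable_UN') auto
  finally show ?thesis .
qed

lemma approx:
  fixes X K :: "'a::metric_space set" and f :: "'a \<Rightarrow> real" and \<U> \<V> \<A> :: "'a set set" and \<delta> :: real
  assumes cX: "compact X" and cK: "closed K" and KX: "K \<subseteq> X" and cf: "continuous_on X f"
    and U: "finite_open_cover X \<U>" and V: "\<V> \<in> borel_covers X" and ref: "\<V> \<succeq>\<^sub>c \<U>" and dpos: "\<delta> > 0"
    and alg: "balg X \<A>" and A3: "\<U> \<subseteq> \<A>" and A4: "\<And>q. q \<in> \<rat> \<Longrightarrow> {y\<in>X. f y < q} \<in> \<A>"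
    and A5: "\<And>c r. c \<in> X \<Longrightarrow> r > 0 \<Longrightarrow> \<exists>D\<in>\<A>. c \<in> D \<and> D \<subseteq> ball c r"
  shows "\<exists>\<V>'. \<V>' \<subseteq> \<A> \<and> finite \<V>' \<and> \<Union>\<V>' = X \<and> \<V>' \<succeq>\<^sub>c \<U> \<and>
           (\<Sum>W\<in>\<V>'. trK f K W) \<le> (\<Sum>V\<in>\<V>. trK f K V) + real (card \<V>) * \<delta>"
proof -
  have finV: "finite \<V>" and covV: "\<Union>\<V> = X" using V by (auto simp: borel_covers_def)
  have VX: "V \<subseteq> X" if "V \<in> \<V>" for V using covV that by blast
  have finU: "finite \<U>" and openU: "\<And>U. U \<in> \<U> \<Longrightarrow> openin (top_of_set X) U"
    using U by (auto simp: finite_open_cover_def)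
  have bddX: "bdd_above (f ` X)"
    by (intro bounded_imp_bdd_above compact_imp_bounded compact_continuous_image cf cX)
  have bddS: "bdd_above (f ` S)" if "S \<subseteq> X" for S
    using bddX that by (meson bdd_above_mono image_mono)
  define tp where "tp y = {V\<in>\<V>. y \<in> V}" for y
  define atom where "atom S = {y\<in>X. tp y = S}" for S
  define \<S> where "\<S> = tp ` X"
  have finS: "finite \<S>"
    by (rule finite_subset[of _ "Pow \<V>"]) (auto simp: \<S>_def tp_def finV)
  have atom_sub: "atom S \<subseteq> V" if "V \<in> S" for S V
    using that by (auto simp: atom_def tp_def)
  have atomX: "atom S \<subseteq> X" for S by (auto simp: atom_def)
  have tp_in: "tp y \<in> \<S>" "y \<in> atom (tp y)" if "y \<in> X" for y
    using that by (auto simp: \<S>_def atom_def)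
  define I where "I = {S\<in>\<S>. atom S \<inter> K \<noteq> {}}"
  define TS where "TS S = X \<inter> \<Inter>{U\<in>\<U>. atom S \<subseteq> U}" for S
  have TS_alg: "TS S \<in> \<A>" for S
    unfolding TS_def using finU A3 by (intro balg_Inter[OF alg]) auto
  have TS_open: "openin (top_of_set X) (TS S)" for S
  proof -
    have "TS S = \<Inter>(insert X {U\<in>\<U>. atom S \<subseteq> U})" by (auto simp: TS_def)
    also have "openin (top_of_set X) \<dots>"
      using finU openU by (intro openin_Inter) auto
    finally show ?thesis .
  qed
  have atom_TS: "atom S \<subseteq> TS S" for S using atomX by (auto simp: TS_def)
  have TS_U: "TS S \<subseteq> U" if "V \<in> S" "V \<subseteq> U" "U \<in> \<U>" for S V U
    using that atom_sub[of V S] by (auto simp: TS_def)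
  define sS where "sS S = Sup (f ` (atom S \<inter> K))" for S
  have "\<forall>S\<in>I. \<exists>r\<in>\<rat>. sS S < r \<and> r < sS S + \<delta>"
    using dpos by (intro ballI Rats_dense_in_real) auto
  then obtain q where q: "\<And>S. S \<in> I \<Longrightarrow> q S \<in> \<rat> \<and> sS S < q S \<and> q S < sS S + \<delta>"
    by metis
  have le_sS: "f y \<le> sS S" if "y \<in> atom S \<inter> K" for y S
    unfolding sS_def using that atomX by (intro cSup_upper bddS) auto
  define OS where "OS S = (if S \<in> I then TS S \<inter> {y\<in>X. f y < q S} else TS S - K)" for S
  have OS_TS: "OS S \<subseteq> TS S" for S by (auto simp: OS_def)
  have OS_open: "openin (top_of_set X) (OS S)" for S
  proof (cases "S \<in> I")
    case True
    have "{y\<in>X. f y < q S} = X \<inter> f -` {..<q S}" by auto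
    then have "openin (top_of_set X) {y\<in>X. f y < q S}"
      using continuous_openin_preimage_gen[OF cf, of "{..<q S}"] by simp
    then show ?thesis using True TS_open by (simp add: OS_def openin_Int)
  next
    case False
    have "TS S - K = TS S \<inter> (- K)" by auto
    then show ?thesis using False TS_open cK openin_Int_open[of X "TS S" "-K"]
      by (simp add: OS_def open_Compl)
  qed
  have K_sub: "tp y \<in> I \<and> y \<in> OS (tp y)" if "y \<in> K" for y
  proof -
    have yX: "y \<in> X" using that KX by auto
    have I: "tp y \<in> I" using tp_in[OF yX] that by (auto simp: I_def)
    have "f y \<le> sS (tp y)" using le_sS tp_in[OF yX] that by auto
    then have "f y < q (tp y)" using q[OF I] by auto
    then show ?thesis using I yX atom_TS tp_in[OF yX] by (auto simp: OS_def)
  qed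
  have "\<forall>S\<in>\<S>. \<exists>y. y \<in> atom S \<and> (S \<in> I \<longrightarrow> y \<in> K)"
  proof
    fix S assume S: "S \<in> \<S>"
    show "\<exists>y. y \<in> atom S \<and> (S \<in> I \<longrightarrow> y \<in> K)"
    proof (cases "S \<in> I")
      case True then show ?thesis by (auto simp: I_def)
    next
      case False
      obtain x where "x \<in> X" "S = tp x" using S by (auto simp: \<S>_def)
      then show ?thesis using False tp_in by blast
    qed
  qed
  then obtain c where c: "\<And>S. S \<in> \<S> \<Longrightarrow> c S \<in> atom S \<and> (S \<in> I \<longrightarrow> c S \<in> K)"
    by metis
  have cX: "c S \<in> X" if "S \<in> \<S>" for S using c[OF that] atomX by auto
  have c_OS: "c S \<in> OS S" if S: "S \<in> \<S>" for S
  proof (cases "S \<in> I")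
    case True
    have "f (c S) \<le> sS S" using le_sS c[OF S] True by auto
    then show ?thesis using True q[OF True] c[OF S] atom_TS cX[OF S] by (auto simp: OS_def)
  next
    case False
    have "c S \<notin> K" using c[OF S] False S by (auto simp: I_def)
    then show ?thesis using False c[OF S] atom_TS by (auto simp: OS_def)
  qed
  have c_tp: "tp (c S) = S" if "S \<in> \<S>" for S using c[OF that] by (auto simp: atom_def)
  have "\<forall>S\<in>\<S>. \<exists>e>0. ball (c S) e \<inter> X \<subseteq> OS S"
    using OS_open c_OS by (meson openin_contains_ball)
  then obtain rS where rS: "\<And>S. S \<in> \<S> \<Longrightarrow> rS S > 0 \<and> ball (c S) (rS S) \<inter> X \<subseteq> OS S"
    by metis
  define R where "R = insert 1 (rS ` \<S> \<union> (\<lambda>p. dist (c (fst p)) (c (snd p)) / 2) ` {p \<in> \<S>\<times>\<S>. fst p \<noteq> snd p})"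
  define r where "r = Min R"
  have finR: "finite R" unfolding R_def using finS by auto
  have "r > 0" unfolding r_def
  proof (subst Min_gr_iff[OF finR])
    show "R \<noteq> {}" by (simp add: R_def)
    show "\<forall>a\<in>R. 0 < a"
    proof -
      have neq: "S = S'" if "S \<in> \<S>" "S' \<in> \<S>" "c S = c S'" for S S'
        using c_tp that by metis
      show ?thesis using rS by (auto simp: R_def dest: neq)
    qed
  qed
  have r1: "r \<le> rS S" if "S \<in> \<S>" for S
    unfolding r_def using finR that by (intro Min_le) (auto simp: R_def)
  have r2: "r \<le> dist (c S) (c S') / 2" if "S \<in> \<S>" "S' \<in> \<S>" "S \<noteq> S'" for S S'
  proof -
    have "dist (c S) (c S') / 2 \<in> R" unfolding R_def
      by (rule insertI2, rule UnI2, rule image_eqI[of _ _ "(S, S')"]) (use that in auto)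
    then show ?thesis unfolding r_def using finR by (intro Min_le)
  qed
  have "\<forall>S\<in>\<S>. \<exists>D\<in>\<A>. c S \<in> D \<and> D \<subseteq> ball (c S) r"
    using A5 cX \<open>r > 0\<close> by blast
  then obtain D where D: "\<And>S. S \<in> \<S> \<Longrightarrow> D S \<in> \<A> \<and> c S \<in> D S \<and> D S \<subseteq> ball (c S) r"
    by metis
  have D_OS: "D S \<subseteq> OS S" if S: "S \<in> \<S>" for S
  proof -
    have "D S \<subseteq> X" using D[OF S] balg_sub[OF alg] by auto
    moreover have "ball (c S) r \<subseteq> ball (c S) (rS S)" using r1[OF S] by auto
    ultimately show ?thesis using D[OF S] rS[OF S] by blast
  qed
  have D_disj: "S = S'" if "S \<in> \<S>" "S' \<in> \<S>" "z \<in> D S" "z \<in> D S'" for S S' z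
  proof (rule ccontr)
    assume ne: "S \<noteq> S'"
    have "dist (c S) z < r" "dist (c S') z < r" using D[OF that(1)] D[OF that(2)] that(3,4) by auto
    moreover have "dist (c S) (c S') \<le> dist (c S) z + dist (c S') z"
      by (simp add: dist_triangle2)
    ultimately show False using r2[OF that(1,2) ne] by linarith
  qed
  define Dall where "Dall = \<Union>(D ` \<S>)"
  define W where "W S = (if S \<in> I then OS S else {})" for S
  define WU where "WU = \<Union>(W ` \<S>)"
  define \<nu> where "\<nu> = to_nat_on \<S>"
  have inj\<nu>: "inj_on \<nu> \<S>" unfolding \<nu>_def using finS by (intro inj_on_to_nat_on countable_finite)
  define A' where "A' S = D S \<union> ((X - Dall) \<inter> ((W S - \<Union>(W ` {S'\<in>\<S>. \<nu> S' < \<nu> S})) \<union>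
                          ((TS S - WU) - \<Union>(TS ` {S'\<in>\<S>. \<nu> S' < \<nu> S}))))" for S
  have W_alg: "W S \<in> \<A>" for S
  proof (cases "S \<in> I")
    case True
    then have "q S \<in> \<rat>" using q by auto
    then show ?thesis using True TS_alg A4 balg_Int[OF alg] by (simp add: W_def OS_def)
  qed (simp add: W_def balg_empty[OF alg])
  have A'_alg: "A' S \<in> \<A>" if S: "S \<in> \<S>" for S
  proof -
    have un: "\<Union>(h ` T) \<in> \<A>" if "T \<subseteq> \<S>" "\<And>S. S \<in> \<S> \<Longrightarrow> h S \<in> \<A>" for T h
      using that finS by (intro balg_Union[OF alg]) (auto intro: finite_subset)
    have f1: "Dall \<in> \<A>" unfolding Dall_def using D by (intro un) auto
    have f2: "WU \<in> \<A>" unfolding WU_def using W_alg by (intro un) auto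
    have f3: "\<Union>(W ` {S'\<in>\<S>. \<nu> S' < \<nu> S}) \<in> \<A>" using W_alg by (intro un) auto
    have f4: "\<Union>(TS ` {S'\<in>\<S>. \<nu> S' < \<nu> S}) \<in> \<A>" using TS_alg by (intro un) auto
    have g1: "X - Dall \<in> \<A>" by (rule balg_Compl[OF alg f1])
    have g2: "W S - \<Union>(W ` {S'\<in>\<S>. \<nu> S' < \<nu> S}) \<in> \<A>"
      by (rule balg_Diff[OF alg W_alg f3])
    have g3: "(TS S - WU) - \<Union>(TS ` {S'\<in>\<S>. \<nu> S' < \<nu> S}) \<in> \<A>"
      by (rule balg_Diff[OF alg balg_Diff[OF alg TS_alg f2] f4])
    have g4: "(X - Dall) \<inter> ((W S - \<Union>(W ` {S'\<in>\<S>. \<nu> S' < \<nu> S})) \<union>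
                          ((TS S - WU) - \<Union>(TS ` {S'\<in>\<S>. \<nu> S' < \<nu> S}))) \<in> \<A>"
      by (rule balg_Int[OF alg g1 balg_Un[OF alg g2 g3]])
    show ?thesis unfolding A'_def by (rule balg_Un[OF alg _ g4]) (use D[OF S] in blast)
  qed
  have A'_X: "A' S \<subseteq> X" if "S \<in> \<S>" for S using A'_alg[OF that] balg_sub[OF alg] by auto
  have A'_iff: "z \<in> A' S \<longleftrightarrow> z \<in> D S \<or> (z \<in> X \<and> z \<notin> Dall \<and>
      ((z \<in> W S \<and> (\<forall>S'\<in>\<S>. \<nu> S' < \<nu> S \<longrightarrow> z \<notin> W S')) \<or>
       (z \<in> TS S \<and> z \<notin> WU \<and> (\<forall>S'\<in>\<S>. \<nu> S' < \<nu> S \<longrightarrow> z \<notin> TS S'))))" for z S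
    unfolding A'_def by blast
  have Dall_iff: "z \<in> Dall \<longleftrightarrow> (\<exists>S\<in>\<S>. z \<in> D S)" for z unfolding Dall_def by blast
  have WU_iff: "z \<in> WU \<longleftrightarrow> (\<exists>S\<in>\<S>. z \<in> W S)" for z unfolding WU_def by blast
  have W_OS: "W S \<subseteq> OS S" for S by (simp add: W_def)
  have A'_TS: "A' S \<subseteq> TS S" if S: "S \<in> \<S>" for S
    using D_OS[OF S] OS_TS[of S] W_OS[of S] unfolding subset_iff A'_iff by blast
  have c_A': "c S \<in> A' S" if "S \<in> \<S>" for S using D[OF that] unfolding A'_iff by blast
  have A'_disj0: False if S: "S1 \<in> \<S>" "S2 \<in> \<S>" "z \<in> A' S1" "z \<in> A' S2" "\<nu> S1 < \<nu> S2" for S1 S2 z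
  proof (cases "z \<in> Dall")
    case True
    then have "z \<in> D S1" "z \<in> D S2" using that(3,4) unfolding A'_iff by blast+
    then have "S1 = S2" using D_disj S by blast
    then show False using that by simp
  next
    case False
    then have nD: "z \<notin> D S1" using S(1) Dall_iff by blast
    from False have nD2: "z \<notin> D S2" using S(2) Dall_iff by blast
    have a1: "z \<in> W S1 \<or> (z \<in> TS S1 \<and> z \<notin> WU)" using that(3) nD unfolding A'_iff by blast
    have a2: "(z \<in> W S2 \<and> z \<notin> W S1) \<or> (z \<in> TS S2 \<and> z \<notin> WU \<and> z \<notin> TS S1)"
      using that(4) nD2 S(1) that(5) unfolding A'_iff by blast
    show False using a1 a2 S(1,2) WU_iff by blast
  qed
  have A'_disj: "S1 = S2" if "S1 \<in> \<S>" "S2 \<in> \<S>" "z \<in> A' S1" "z \<in> A' S2" for S1 S2 z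
  proof (rule ccontr)
    assume "S1 \<noteq> S2"
    then have "\<nu> S1 \<noteq> \<nu> S2" using inj\<nu> that(1,2) by (meson inj_on_eq_iff)
    then show False using A'_disj0 that by (metis linorder_neqE_nat)
  qed
  have A'_cover: "\<exists>S\<in>\<S>. y \<in> A' S" if yX: "y \<in> X" for y
  proof (cases "y \<in> Dall")
    case True then show ?thesis unfolding Dall_iff A'_iff by blast
  next
    case nD: False
    show ?thesis
    proof (cases "y \<in> WU")
      case True
      then obtain S0 where "S0 \<in> \<S> \<and> y \<in> W S0" using WU_iff by blast
      from ex_has_least_nat[of "\<lambda>S. S \<in> \<S> \<and> y \<in> W S", OF this, of \<nu>]
      obtain S where S: "S \<in> \<S>" "y \<in> W S" "\<And>S'. S' \<in> \<S> \<and> y \<in> W S' \<Longrightarrow> \<nu> S \<le> \<nu> S'" by blast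
      have "\<forall>S'\<in>\<S>. \<nu> S' < \<nu> S \<longrightarrow> y \<notin> W S'" using S(3) by (meson leD)
      then have "y \<in> A' S" using nD yX S(2) unfolding A'_iff by blast
      then show ?thesis using S by blast
    next
      case nW: False
      have "tp y \<in> \<S> \<and> y \<in> TS (tp y)" using tp_in[OF yX] atom_TS by auto
      from ex_has_least_nat[of "\<lambda>S. S \<in> \<S> \<and> y \<in> TS S", OF this, of \<nu>]
      obtain S where S: "S \<in> \<S>" "y \<in> TS S" "\<And>S'. S' \<in> \<S> \<and> y \<in> TS S' \<Longrightarrow> \<nu> S \<le> \<nu> S'" by blast
      have "\<forall>S'\<in>\<S>. \<nu> S' < \<nu> S \<longrightarrow> y \<notin> TS S'" using S(3) by (meson leD)
      then have "y \<in> A' S" using nD nW yX S(2) unfolding A'_iff by blast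
      then show ?thesis using S by blast
    qed
  qed
  have K_WU: "K \<subseteq> WU"
  proof
    fix y assume "y \<in> K"
    then have "tp y \<in> I" "y \<in> OS (tp y)" "tp y \<in> \<S>" using K_sub KX tp_in by auto
    then show "y \<in> WU" unfolding WU_iff W_def by auto
  qed
  have A'_K_notI: "A' S \<inter> K = {}" if "S \<in> \<S>" "S \<notin> I" for S
  proof -
    have "D S \<inter> K = {}" using D_OS[OF that(1)] that(2) by (auto simp: OS_def)
    moreover have "W S = {}" using that(2) by (simp add: W_def)
    ultimately show ?thesis using K_WU unfolding disjoint_iff A'_iff by blast
  qed
  have A'_K_I: "S \<in> I \<and> z \<in> OS S" if S: "S \<in> \<S>" "z \<in> A' S" "z \<in> K" for S z
  proof -
    have "S \<in> I" using A'_K_notI S by blast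
    then show ?thesis using D_OS[OF S(1)] S K_WU W_OS[of S] unfolding A'_iff by blast
  qed
  define \<phi> where "\<phi> V = \<Union>(A' ` {S\<in>\<S>. V \<in> S})" for V
  have \<phi>_alg: "\<phi> V \<in> \<A>" for V
    unfolding \<phi>_def using finS A'_alg by (intro balg_Union[OF alg]) auto
  have c_\<phi>: "c (tp y) \<in> \<phi> V \<longleftrightarrow> y \<in> V" if "V \<in> \<V>" "y \<in> X" for V y
  proof
    assume "c (tp y) \<in> \<phi> V"
    then obtain S where "S \<in> \<S>" "V \<in> S" "c (tp y) \<in> A' S" by (auto simp: \<phi>_def)
    then have "S = tp y" using A'_disj c_A' tp_in[OF that(2)] by blast
    then show "y \<in> V" using \<open>V \<in> S\<close> by (auto simp: tp_def)
  next
    assume "y \<in> V"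
    then show "c (tp y) \<in> \<phi> V" using that tp_in[OF that(2)] c_A'
      by (auto simp: \<phi>_def tp_def)
  qed
  have inj\<phi>: "inj_on \<phi> \<V>"
  proof (rule inj_onI)
    fix V1 V2 assume V12: "V1 \<in> \<V>" "V2 \<in> \<V>" "\<phi> V1 = \<phi> V2"
    have "y \<in> V1 \<longleftrightarrow> y \<in> V2" if "y \<in> X" for y
      using c_\<phi>[OF V12(1) that] c_\<phi>[OF V12(2) that] V12(3) by simp
    then show "V1 = V2" using VX[OF V12(1)] VX[OF V12(2)] by blast
  qed
  have cov': "\<Union>(\<phi> ` \<V>) = X"
  proof
    show "\<Union>(\<phi> ` \<V>) \<subseteq> X" using A'_X by (auto simp: \<phi>_def)
    show "X \<subseteq> \<Union>(\<phi> ` \<V>)"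
    proof
      fix y assume "y \<in> X"
      then obtain S where S: "S \<in> \<S>" "y \<in> A' S" using A'_cover by blast
      then obtain z where z: "z \<in> X" "S = tp z" by (auto simp: \<S>_def)
      then obtain V where "V \<in> \<V>" "z \<in> V" using covV by blast
      then have "V \<in> S" using z by (auto simp: tp_def)
      then show "y \<in> \<Union>(\<phi> ` \<V>)" using S \<open>V \<in> \<V>\<close> by (auto simp: \<phi>_def)
    qed
  qed
  have ref': "\<phi> ` \<V> \<succeq>\<^sub>c \<U>"
    unfolding refines_def
  proof
    fix W assume "W \<in> \<phi> ` \<V>"
    then obtain V where V: "V \<in> \<V>" "W = \<phi> V" by auto
    then obtain U where U: "U \<in> \<U>" "V \<subseteq> U" using ref by (auto simp: refines_def)
    have "\<phi> V \<subseteq> U" unfolding \<phi>_def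
    proof (rule UN_least)
      fix S assume "S \<in> {S\<in>\<S>. V \<in> S}"
      then show "A' S \<subseteq> U" using A'_TS[of S] TS_U[of V S U] U by blast
    qed
    then show "\<exists>U\<in>\<U>. W \<subseteq> U" using U V by auto
  qed
  have tr_le: "trK f K (\<phi> V) \<le> trK f K V + \<delta>" if V: "V \<in> \<V>" for V
  proof (cases "V \<inter> K = {}")
    case True
    have "\<phi> V \<inter> K = {}"
    proof (rule ccontr)
      assume "\<phi> V \<inter> K \<noteq> {}"
      then obtain z S where "S \<in> \<S>" "V \<in> S" "z \<in> A' S" "z \<in> K" by (auto simp: \<phi>_def)
      then have "S \<in> I" using A'_K_I by blast
      then have "atom S \<inter> K \<noteq> {}" by (auto simp: I_def)
      then show False using True atom_sub[OF \<open>V \<in> S\<close>] by blast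
    qed
    then show ?thesis using True dpos by (simp add: trK_def)
  next
    case False
    then obtain y where y: "y \<in> V" "y \<in> K" by blast
    have yX: "y \<in> X" using y KX by auto
    have I0: "tp y \<in> I" using K_sub y by auto
    have "c (tp y) \<in> \<phi> V \<inter> K" using c_\<phi>[OF V yX] y c[OF tp_in(1)[OF yX]] I0 by auto
    then have ne: "\<phi> V \<inter> K \<noteq> {}" by blast
    have "Sup (f ` (\<phi> V \<inter> K)) \<le> Sup (f ` (V \<inter> K)) + \<delta>"
    proof (rule cSup_least)
      show "f ` (\<phi> V \<inter> K) \<noteq> {}" using ne by auto
      fix t assume "t \<in> f ` (\<phi> V \<inter> K)"
      then obtain z S where zS: "t = f z" "S \<in> \<S>" "V \<in> S" "z \<in> A' S" "z \<in> K"
        by (auto simp: \<phi>_def)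
      then have SI: "S \<in> I" and zO: "z \<in> OS S" using A'_K_I by auto
      have "f z < q S" using zO SI by (auto simp: OS_def)
      moreover have "q S < sS S + \<delta>" using q[OF SI] by auto
      moreover have "sS S \<le> Sup (f ` (V \<inter> K))" unfolding sS_def
        using SI atom_sub[OF zS(3)] VX[OF V]
        by (intro cSup_subset_mono bddS) (auto simp: I_def)
      ultimately show "t \<le> Sup (f ` (V \<inter> K)) + \<delta>" using zS by linarith
    qed
    then show ?thesis using ne False by (simp add: trK_def)
  qed
  have "(\<Sum>W\<in>\<phi> ` \<V>. trK f K W) = (\<Sum>V\<in>\<V>. trK f K (\<phi> V))"
    by (rule sum.reindex[OF inj\<phi>, unfolded comp_def])
  also have "\<dots> \<le> (\<Sum>V\<in>\<V>. trK f K V + \<delta>)" by (rule sum_mono) (rule tr_le)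
  also have "\<dots> = (\<Sum>V\<in>\<V>. trK f K V) + real (card \<V>) * \<delta>" by (simp add: sum.distrib)
  finally have sum: "(\<Sum>W\<in>\<phi> ` \<V>. trK f K W) \<le> (\<Sum>V\<in>\<V>. trK f K V) + real (card \<V>) * \<delta>" .
  show ?thesis
    by (rule exI[of _ "\<phi> ` \<V>"]) (use \<phi>_alg finV cov' ref' sum in auto)
qed

lemma trK_measurable:
  fixes X :: "'a::metric_space set" and f :: "'a \<Rightarrow> real"
  assumes cX: "compact X" and GK: "setvalued_into_K X G" and mG: "measurable_multifun X G"
    and cf: "continuous_on X f" and fA: "fsigma_in (top_of_set X) A"
  shows "(\<lambda>x. trK f (G x) A) \<in> borel_measurable (borel_on X)"
proof (rule borel_measurableI_greater)
  fix a :: real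
  have sp: "space (borel_on X) = X" by (simp add: borel_on_def space_restrict_space)
  have met: "metrizable_space (top_of_set X)"
    by (simp add: metrizable_space_euclidean metrizable_space_subtopology)
  have bddX: "bdd_above (f ` X)"
    by (intro bounded_imp_bdd_above compact_imp_bounded compact_continuous_image cf cX)
  define Q where "Q = {y\<in>X. a < f y}"
  have "Q = X \<inter> f -` {a<..}" by (auto simp: Q_def)
  then have "openin (top_of_set X) Q" using continuous_openin_preimage_gen[OF cf, of "{a<..}"] by simp
  then have fQ: "fsigma_in (top_of_set X) (A \<inter> Q)"
    using fA met by (intro fsigma_in_Int[OF fA] open_imp_fsigma_in)
  define L where "L B = {x\<in>X. G x \<inter> B \<noteq> {}}" for B
  have eq: "{x\<in>space (borel_on X). a < trK f (G x) A} = (if a < 0 then X - L A else {}) \<union> L (A \<inter> Q)"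
  proof (intro set_eqI iffI)
    fix x assume "x \<in> {x\<in>space (borel_on X). a < trK f (G x) A}"
    then have x: "x \<in> X" "a < trK f (G x) A" using sp by auto
    have GX: "G x \<subseteq> X" using GK x(1) by (auto simp: setvalued_into_K_def)
    show "x \<in> (if a < 0 then X - L A else {}) \<union> L (A \<inter> Q)"
    proof (cases "A \<inter> G x = {}")
      case True then show ?thesis using x by (auto simp: trK_def L_def)
    next
      case False
      have bdd: "bdd_above (f ` (A \<inter> G x))" using bddX GX by (meson bdd_above_mono image_mono inf_le2 order_trans)
      have "a < Sup (f ` (A \<inter> G x))" using x False by (simp add: trK_def Int_commute)
      then obtain y where "y \<in> A \<inter> G x" "a < f y" using False bdd by (auto simp: less_cSup_iff)
      then show ?thesis using x GX by (auto simp: L_def Q_def)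
    qed
  next
    fix x assume x: "x \<in> (if a < 0 then X - L A else {}) \<union> L (A \<inter> Q)"
    then have xX: "x \<in> X" by (auto simp: L_def split: if_splits)
    have GX: "G x \<subseteq> X" using GK xX by (auto simp: setvalued_into_K_def)
    show "x \<in> {x\<in>space (borel_on X). a < trK f (G x) A}"
    proof (cases "A \<inter> G x = {}")
      case True
      then have "x \<notin> L (A \<inter> Q)" by (auto simp: L_def)
      then show ?thesis using x True xX sp by (auto simp: trK_def L_def Int_commute split: if_splits)
    next
      case False
      have bdd: "bdd_above (f ` (A \<inter> G x))" using bddX GX by (meson bdd_above_mono image_mono inf_le2 order_trans)
      have "x \<in> L (A \<inter> Q)" using x False by (auto simp: L_def Int_commute split: if_splits)
      then obtain y where "y \<in> A \<inter> G x" "a < f y" by (auto simp: L_def Q_def)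
      then have "a < Sup (f ` (A \<inter> G x))" using bdd False by (auto simp: less_cSup_iff)
      then show ?thesis using False xX sp by (simp add: trK_def Int_commute)
    qed
  qed
  have LA: "L A \<in> sets (borel_on X)" unfolding L_def using lower_inv_fsigma[OF mG fA] .
  have LAQ: "L (A \<inter> Q) \<in> sets (borel_on X)" unfolding L_def using lower_inv_fsigma[OF mG fQ] .
  have "X \<in> sets (borel_on X)" using sets.top[of "borel_on X"] sp by simp
  then show "{x\<in>space (borel_on X). a < trK f (G x) A} \<in> sets (borel_on X)"
    unfolding eq using LA LAQ by auto
qed

theorem lemma4p1:
  fixes X :: "'a::metric_space set" and G :: "'a \<Rightarrow> 'a set" and f :: "'a \<Rightarrow> real"
    and \<U> :: "'a set set"
  assumes "compact X"
    and "setvalued_into_K X G"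
    and "measurable_multifun X G"
    and "continuous_on X f"
    and "finite_open_cover X \<U>"
  shows "Ffun X G f \<U> \<in> borel_measurable (borel_on X)"
proof -
  note cX = assms(1) and GK = assms(2) and mG = assms(3) and cf = assms(4) and U = assms(5)
  have clX: "closed X" using cX by (rule compact_imp_closed)
  have sp: "space (borel_on X) = X" by (simp add: borel_on_def space_restrict_space)
  have finU: "finite \<U>" and openU: "\<And>U. U \<in> \<U> \<Longrightarrow> openin (top_of_set X) U"
    using U by (auto simp: finite_open_cover_def)
  have "\<forall>n. \<exists>k. finite k \<and> k \<subseteq> X \<and> X \<subseteq> (\<Union>x\<in>k. ball x (inverse (real (Suc n))))"
    using seq_compact_imp_totally_bounded[OF compact_imp_seq_compact[OF cX]] by simp
  then obtain k where k: "\<And>n. finite (k n) \<and> k n \<subseteq> X \<and> X \<subseteq> (\<Union>x\<in>k n. ball x (inverse (real (Suc n))))"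
    by metis
  define P where "P q = {y\<in>X. f y < q}" for q
  define \<G> where "\<G> = \<U> \<union> P ` \<rat> \<union> (\<Union>n. (\<lambda>d. X \<inter> ball d (inverse (real (Suc n)))) ` k n) \<union> {{}}"
  have c3: "countable (\<Union>n. (\<lambda>d. X \<inter> ball d (inverse (real (Suc n)))) ` k n)"
    using k by (intro countable_UN) (auto intro: countable_finite)
  have cG: "countable \<G>" unfolding \<G>_def
    using c3 countable_finite[OF finU] countable_image[OF countable_rat, of P] by simp
  have neG: "\<G> \<noteq> {}" by (auto simp: \<G>_def)
  have openP: "openin (top_of_set X) (P q)" for q
  proof -
    have "P q = X \<inter> f -` {..<q}" by (auto simp: P_def)
    then show ?thesis using continuous_openin_preimage_gen[OF cf, of "{..<q}"] by simp
  qed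
  have openG: "openin (top_of_set X) G'" if "G' \<in> \<G>" for G'
    using that openU openP by (auto simp: \<G>_def)
  define g where "g = from_nat_into \<G>"
  have gG: "g n \<in> \<G>" for n unfolding g_def using neG by (rule from_nat_into)
  have openg: "openin (top_of_set X) (g n)" for n using openG[OF gG] .
  define \<A> where "\<A> = range (sev X g)"
  have alg: "balg X \<A>" unfolding \<A>_def by (rule balg_sev)
  have cA: "countable \<A>" unfolding \<A>_def by simp
  have inA: "G' \<in> \<A>" if GG: "G' \<in> \<G>" for G'
  proof -
    obtain n where "g n = G'" using from_nat_into_surj[OF cG GG] by (auto simp: g_def)
    moreover have "G' \<subseteq> X" using openG[OF GG] by (rule openin_imp_subset)
    ultimately have "sev X g (SAt n) = G'" by auto
    then show ?thesis unfolding \<A>_def by (metis rangeI)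
  qed
  have A3: "\<U> \<subseteq> \<A>" using inA by (auto simp: \<G>_def)
  have A4: "{y\<in>X. f y < q} \<in> \<A>" if "q \<in> \<rat>" for q
    using inA that by (auto simp: \<G>_def P_def[symmetric])
  have A5: "\<exists>D\<in>\<A>. c \<in> D \<and> D \<subseteq> ball c r" if cr: "c \<in> X" "r > 0" for c r
  proof -
    obtain n where n: "inverse (real (Suc n)) < r / 2" using reals_Archimedean[of "r/2"] \<open>r > 0\<close> by auto
    obtain d where d: "d \<in> k n" "c \<in> ball d (inverse (real (Suc n)))" using k[of n] cr(1) by blast
    define D where "D = X \<inter> ball d (inverse (real (Suc n)))"
    have "D \<in> \<G>" unfolding \<G>_def D_def using d(1) by blast
    moreover have "c \<in> D" using d cr by (auto simp: D_def)
    moreover have "D \<subseteq> ball c r"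
    proof
      fix z assume "z \<in> D"
      then have "dist d z < inverse (real (Suc n))" by (auto simp: D_def)
      moreover have "dist d c < inverse (real (Suc n))" using d(2) by auto
      moreover have "dist c z \<le> dist d c + dist d z" by (simp add: dist_triangle3)
      ultimately show "z \<in> ball c r" using n by auto
    qed
    ultimately show ?thesis using inA by blast
  qed
  have Aprops: "fsigma_in (top_of_set X) A \<and> A \<in> sets (borel_on X)" if AA: "A \<in> \<A>" for A
  proof -
    obtain e where e: "A = sev X g e" using AA by (auto simp: \<A>_def)
    have "A \<subseteq> X" using balg_sub[OF alg AA] .
    moreover have "fsigma_in (top_of_set X) A \<and> A \<in> sets borel"
      using sev_props[where e=e and g=g, OF clX openg] e by auto
    ultimately show ?thesis using clX
      by (auto simp: borel_on_def sets_restrict_space_iff)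
  qed
  define \<C> where "\<C> = {\<V>. \<V> \<subseteq> \<A> \<and> \<V> \<in> borel_covers X \<and> \<V> \<succeq>\<^sub>c \<U>}"
  have cC: "countable \<C>"
    by (rule countable_subset[OF _ countable_Collect_finite_subset[OF cA]])
       (auto simp: \<C>_def borel_covers_def)
  define H where "H \<V> x = ereal (\<Sum>V\<in>\<V>. trK f (G x) V)" for \<V> x
  have mH: "H \<V> \<in> borel_measurable (borel_on X)" if "\<V> \<in> \<C>" for \<V>
  proof -
    have "\<And>V. V \<in> \<V> \<Longrightarrow> (\<lambda>x. trK f (G x) V) \<in> borel_measurable (borel_on X)"
      using that Aprops by (intro trK_measurable[OF cX GK mG cf]) (auto simp: \<C>_def)
    then show ?thesis unfolding H_def by (intro borel_measurable_ereal borel_measurable_sum) auto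
  qed
  have minf: "(\<lambda>x. INF \<V>\<in>\<C>. H \<V> x) \<in> borel_measurable (borel_on X)"
    by (rule borel_measurable_INF[OF cC mH])
  have eqx: "Ffun X G f \<U> x = (INF \<V>\<in>\<C>. H \<V> x)" if xX: "x \<in> X" for x
  proof -
    define Call where "Call = {\<V>. \<V> \<in> borel_covers X \<and> \<V> \<succeq>\<^sub>c \<U>}"
    have trm_eq: "(if V \<inter> G x = {} then 0 else ereal (Sup (f ` (V \<inter> G x)))) = ereal (trK f (G x) V)" for V
      by (simp add: trK_def)
    have "Ffun X G f \<U> x = (INF \<V>\<in>Call. H \<V> x)"
      unfolding Ffun_def trm_eq sum_ereal H_def Call_def by (simp add: image_def) (metis (no_types, lifting))
    also have "\<dots> = (INF \<V>\<in>\<C>. H \<V> x)"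
    proof (rule antisym)
      show "(INF \<V>\<in>Call. H \<V> x) \<le> (INF \<V>\<in>\<C>. H \<V> x)"
        by (rule INF_superset_mono) (auto simp: \<C>_def Call_def)
      show "(INF \<V>\<in>\<C>. H \<V> x) \<le> (INF \<V>\<in>Call. H \<V> x)"
      proof (rule INF_greatest)
        fix \<V> assume V: "\<V> \<in> Call"
        show "(INF \<V>\<in>\<C>. H \<V> x) \<le> H \<V> x"
        proof (rule ereal_le_epsilon2)
          fix e :: real assume e: "0 < e"
          define \<delta> where "\<delta> = e / (real (card \<V>) + 1)"
          have dpos: "\<delta> > 0" using e by (simp add: \<delta>_def)
          have cd: "real (card \<V>) * \<delta> \<le> e"
            using e by (simp add: \<delta>_def field_simps)
          have GX: "G x \<subseteq> X" "closedin (top_of_set X) (G x)"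
            using GK xX by (auto simp: setvalued_into_K_def)
          have clG: "closed (G x)" using GX(2) clX closedin_closed_eq by blast
          obtain \<V>' where V': "\<V>' \<subseteq> \<A>" "finite \<V>'" "\<Union>\<V>' = X" "\<V>' \<succeq>\<^sub>c \<U>"
            "(\<Sum>W\<in>\<V>'. trK f (G x) W) \<le> (\<Sum>V\<in>\<V>. trK f (G x) V) + real (card \<V>) * \<delta>"
            using approx[OF cX clG GX(1) cf U _ _ dpos alg A3 A4 A5, of \<V>] V
            by (auto simp: Call_def)
          have "\<V>' \<in> \<C>" using V' Aprops by (auto simp: \<C>_def borel_covers_def)
          then have "(INF \<V>\<in>\<C>. H \<V> x) \<le> H \<V>' x" by (rule INF_lower)
          also have "\<dots> \<le> H \<V> x + ereal e" using V'(5) cd by (simp add: H_def)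
          finally show "(INF \<V>\<in>\<C>. H \<V> x) \<le> H \<V> x + ereal e" .
        qed
      qed
    qed
    finally show ?thesis .
  qed
  show ?thesis
    using minf by (subst measurable_cong[where g="\<lambda>x. INF \<V>\<in>\<C>. H \<V> x"]) (auto simp: sp eqx)
qed

end
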